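(* Let $G$ be a non-cyclic finite group of order $n$ and let $q$ be the smallest prime divisor of $n$. Then $$\psi(G)\leq \frac{(n-1)n}{q}+1<\frac{n^2}{q}.$$
   Context: For a finite group $G$, $\psi(G)=\sum_{g\in G} o(g)$ denotes the sum of the orders of all elements of $G$. *)

theory Defs
  imports "HOL-Algebra.Algebra" "HOL-Computational_Algebra.Primes"
begin

definition psi :: "('a, 'b) monoid_scheme \<Rightarrow> nat" where
  "psi G = (\<Sum>g\<in>carrier G. group.ord G g)"

end

theory Submission
  imports Defs
begin

lemma ord_full_cyclic:
  assumes "group G" "finite (carrier G)" "g \<in> carrier G" "group.ord G g = order G"
  shows "cyclic_group G"
proof -
  interpret group G by fact
  have "generate G {g} \<subseteq> carrier G"
    using assms(3) generate_incl by blast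
  moreover have "card (generate G {g}) = card (carrier G)"
    using generate_pow_card[OF assms(3)] assms(4) by (simp add: order_def)
  ultimately have eq: "generate G {g} = carrier G"
    using assms(2) by (metis card_subset_eq)
  have "subgroup_generated G {g} = G"
    unfolding subgroup_generated_def using eq assms(3) by simp
  thus ?thesis unfolding cyclic_group_def using assms(3) by blast
qed

theorem proposition5:
  fixes G :: "('a, 'b) monoid_scheme" and q :: nat
  assumes "group G"
    and "finite (carrier G)"
    and "\<not> cyclic_group G"
    and "Factorial_Ring.prime q" and "q dvd order G"
    and "\<forall>p. Factorial_Ring.prime p \<and> p dvd order G \<longrightarrow> q \<le> p"
  shows "real (psi G) \<le> real ((order G - 1) * order G) / real q + 1
       \<and> real ((order G - 1) * order G) / real q + 1 < real (order G ^ 2) / real q"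
proof -
  interpret group G by fact
  define n where "n = order G"
  have npos: "n > 0" unfolding n_def using assms(2) order_gt_0_iff_finite by blast
  have qpos: "q > 1" using assms(4) prime_gt_1_nat by blast
  have bound: "q * ord g \<le> n" if g: "g \<in> carrier G" for g
  proof -
    have "ord g dvd n" using ord_dvd_group_order[OF g] n_def by simp
    then obtain k where k: "n = ord g * k" by blast
    have "ord g \<noteq> n" using ord_full_cyclic[OF assms(1,2) g] assms(3) n_def by blast
    hence "k \<noteq> 1" using k by auto
    moreover have "k \<noteq> 0" using k npos by auto
    ultimately obtain p where p: "Factorial_Ring.prime p" "p dvd k" using prime_factor_nat by blast
    have "p dvd n" using p k by simp
    hence "q \<le> p" using assms(6) p n_def by blast
    also have "p \<le> k" using p \<open>k \<noteq> 0\<close> dvd_imp_le by blast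
    finally have "q * ord g \<le> k * ord g" by simp
    thus ?thesis using k by (simp add: mult.commute)
  qed
  have rb: "real (ord g) \<le> real n / real q" if "g \<in> carrier G" for g
  proof -
    have "real q * real (ord g) \<le> real n"
      using bound[OF that] by (metis of_nat_le_iff of_nat_mult)
    thus ?thesis using qpos by (simp add: le_divide_eq mult.commute)
  qed
  have "psi G = ord \<one>\<^bsub>G\<^esub> + (\<Sum>g\<in>carrier G - {\<one>\<^bsub>G\<^esub>}. ord g)"
    unfolding psi_def by (rule sum.remove[OF assms(2) one_closed])
  hence "real (psi G) = 1 + (\<Sum>g\<in>carrier G - {\<one>\<^bsub>G\<^esub>}. real (ord g))"
    by (simp add: ord_eq_1)
  also have "\<dots> \<le> 1 + (\<Sum>g\<in>carrier G - {\<one>\<^bsub>G\<^esub>}. real n / real q)"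
    using rb by (intro add_left_mono sum_mono) auto
  also have "\<dots> = 1 + real (n - 1) * (real n / real q)"
    using assms(2) by (simp add: card_Diff_singleton n_def order_def)
  finally have A: "real (psi G) \<le> real ((n - 1) * n) / real q + 1" by simp
  have "n \<noteq> q"
  proof
    assume "n = q"
    have "\<not> trivial_group G" using assms(3) trivial_imp_cyclic_group by blast
    hence "carrier G \<noteq> {\<one>\<^bsub>G\<^esub>}" unfolding trivial_group_def using assms(1) by blast
    then obtain g where g: "g \<in> carrier G" "g \<noteq> \<one>\<^bsub>G\<^esub>"
      using one_closed by blast
    have "ord g dvd q" using ord_dvd_group_order[OF g(1)] \<open>n = q\<close> n_def by simp
    moreover have "ord g \<noteq> 1" using ord_eq_1 g by blast
    ultimately have "ord g = q" using assms(4) prime_nat_iff by blast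
    thus False using ord_full_cyclic[OF assms(1,2) g(1)] assms(3) \<open>n = q\<close> n_def by simp
  qed
  moreover have "q \<le> n" using assms(5) npos n_def dvd_imp_le by blast
  ultimately have "q < n" by simp
  hence "(n - 1) * n + q < n ^ 2" using npos
    by (cases n) (auto simp: power2_eq_square)
  hence "real ((n - 1) * n) + real q < real (n ^ 2)" by (metis of_nat_add of_nat_less_iff)
  hence lt: "(real ((n - 1) * n) + real q) / real q < real (n ^ 2) / real q"
    using qpos by (intro divide_strict_right_mono) auto
  have "real ((n - 1) * n) / real q + 1 = (real ((n - 1) * n) + real q) / real q"
    using qpos by (simp add: add_divide_distrib)
  hence B: "real ((n - 1) * n) / real q + 1 < real (n ^ 2) / real q"
    using lt by simp
  show ?thesis using A B n_def by simp
qed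

end
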